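(* Consider the linear network processes (all activation and output functions replaced by the identity) with input $x^{(t)}\in\mathbb{R}^{p_x}$ and i.i.d. errors $\varepsilon^{(t)}$: (RNN) $y^{(t)}=W_{zh}h^{(t)}+\varepsilon^{(t)}$, $h^{(t)}=W_{hh}h^{(t-1)}+W_{hx}x^{(t)}$; (MRNNF) $y^{(t)}=W_{zh}h^{(t)}+W_{zm}m^{(t)}+\varepsilon^{(t)}$, $h^{(t)}=W_{hh}h^{(t-1)}+W_{hx}x^{(t)}$, $m^{(t)}=W_{mm}m^{(t-1)}+W_{mf}\big((I-\mathcal{B})^d-I\big)x^{(t)}$, with a constant memory parameter $d=(d_1,\dots,d_{p_x})'$, $d_i\in(0,0.5)$. Then, in terms of the definition of long memory network process below, the MRNNF has the capability of handling long-range dependence data (its linear network process can have long memory), while the RNN cannot (its linear network process never has long memory).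
   Context: $B$ is the backshift operator, $B^jX_t=X_{t-j}$. For scalar $d$, $(1-B)^d=\sum_{j=0}^\infty w_j(d)B^j$ with $w_j(d)=\Gamma(j-d)/(j!\,\Gamma(-d))=\prod_{i=0}^{j-1}(i-d)/(i+1)$, and $w_j(d)$ is asymptotically proportional to $j^{-d-1}$. For a vector $d=(d_1,\dots,d_{p_x})'$, $(I-\mathcal{B})^d$ is the diagonal operator $\mathrm{diag}((1-B)^{d_1},\dots,(1-B)^{d_{p_x}})$ acting componentwise. A network process of the form $y^{(t)}=\sum_{k=0}^\infty A_k x^{(t-k)}+\varepsilon^{(t)}$ with coefficient matrices $A_k$ and i.i.d. $\varepsilon^{(t)}$ has long memory if there exist indices $i,j$ and $d\in(0,0.5)$ such that $(A_k)_{ij}\sim k^{-d-1}$ as $k\to\infty$ (decay at this polynomial rate). A network is said to have the capability of handling long-range dependence data if its linear network process (obtained by letting all output and activation functions be the identity) has long memory in this sense. *)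

theory Defs
  imports "HOL-Analysis.Analysis" "HOL-Library.Landau_Symbols"
begin

primrec matpow :: "real^'n^'n \<Rightarrow> nat \<Rightarrow> real^'n^'n" where
  "matpow A 0 = mat 1"
| "matpow A (Suc k) = A ** matpow A k"

text \<open>Fractional differencing weights: (1-B)^d = sum_j fdiff_w j d B^j,
  w_j(d) = prod_{i<j} (i-d)/(i+1).\<close>
definition fdiff_w :: "nat \<Rightarrow> real \<Rightarrow> real" where
  "fdiff_w j d = (\<Prod>i<j. (real i - d) / (real i + 1))"

text \<open>Coefficient of B^j in the diagonal operator (I-B)^d - I, d a vector.\<close>
definition fdiff_minus_I_coeff :: "real^'x \<Rightarrow> nat \<Rightarrow> real^'x^'x" where
  "fdiff_minus_I_coeff d j =
     (if j = 0 then 0 else (\<chi> a b. if a = b then fdiff_w j (d $ a) else 0))"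

text \<open>Long memory of a linear network process y_t = sum_k A_k x_{t-k} + eps_t:
  some entry (A_k)_{ij} decays like (is asymptotically proportional to) k^{-d-1},
  d in (0,1/2).\<close>
definition long_memory :: "(nat \<Rightarrow> real^'x^'y) \<Rightarrow> bool" where
  "long_memory A \<longleftrightarrow> (\<exists>i j d c. 0 < d \<and> d < 1/2 \<and> c \<noteq> 0 \<and>
      (\<lambda>k. A k $ i $ j) \<sim>[at_top] (\<lambda>k. c * real k powr (-d-1)))"

text \<open>Coefficients A_k of the linear RNN process:
  h_t = W_hh h_{t-1} + W_hx x_t, y_t = W_zh h_t + eps_t  gives
  A_k = W_zh W_hh^k W_hx.\<close>
definition rnn_coeff ::
  "real^'h^'y \<Rightarrow> real^'h^'h \<Rightarrow> real^'x^'h \<Rightarrow> nat \<Rightarrow> real^'x^'y" where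
  "rnn_coeff Wzh Whh Whx k = Wzh ** matpow Whh k ** Whx"

text \<open>Coefficients of the linear MRNNF process:
  m_t = W_mm m_{t-1} + W_mf ((I-B)^d - I) x_t, y_t = W_zh h_t + W_zm m_t + eps_t, so
  A_k = W_zh W_hh^k W_hx + W_zm sum_{j=1..k} W_mm^(k-j) W_mf D_j(d).\<close>
definition mrnnf_coeff ::
  "real^'h^'y \<Rightarrow> real^'h^'h \<Rightarrow> real^'x^'h \<Rightarrow> real^'m^'y \<Rightarrow> real^'m^'m \<Rightarrow> real^'x^'m
    \<Rightarrow> real^'x \<Rightarrow> nat \<Rightarrow> real^'x^'y" where
  "mrnnf_coeff Wzh Whh Whx Wzm Wmm Wmf d k =
     Wzh ** matpow Whh k ** Whx
     + Wzm ** (\<Sum>j\<in>{1..k}. matpow Wmm (k - j) ** Wmf ** fdiff_minus_I_coeff d j)"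

end

theory Submission
  imports Defs "HOL-Real_Asymp.Real_Asymp"
begin


lemma no_rec:
  fixes a :: "nat \<Rightarrow> real"
  assumes a0: "a \<longlonglongrightarrow> 0" and rat: "\<And>i. (\<lambda>k. a (k+i) / a k) \<longlonglongrightarrow> 1"
    and nz: "eventually (\<lambda>k. a k \<noteq> 0) sequentially"
  shows "c r \<noteq> 0 \<Longrightarrow> \<forall>k. (\<Sum>j\<le>r. c j * a (k+j)) = 0 \<Longrightarrow> False"
proof (induction r arbitrary: c)
  case 0
  then have "\<forall>k. a k = 0" by simp
  with nz show False by simp
next
  case (Suc r)
  have s0: "(\<Sum>i\<le>Suc r. c i) = 0"
  proof -
    have L: "(\<lambda>k. \<Sum>i\<le>Suc r. c i * (a (k+i) / a k)) \<longlonglongrightarrow> (\<Sum>i\<le>Suc r. c i * 1)"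
      by (intro tendsto_intros rat)
    have "eventually (\<lambda>k. (\<Sum>i\<le>Suc r. c i * (a (k+i) / a k)) = 0) sequentially"
      using nz
    proof eventually_elim
      case (elim k)
      have "(\<Sum>i\<le>Suc r. c i * (a (k+i) / a k)) = (\<Sum>i\<le>Suc r. c i * a (k+i)) / a k"
        unfolding sum_divide_distrib by (simp only: times_divide_eq_right)
      also have "\<dots> = 0" using Suc.prems(2) by simp
      finally show ?case .
    qed
    then have "(\<lambda>k. \<Sum>i\<le>Suc r. c i * (a (k+i) / a k)) \<longlonglongrightarrow> 0"
      by (simp add: tendsto_eventually)
    with L show ?thesis using LIMSEQ_unique by fastforce
  qed
  define b where "b k = (\<Sum>i\<le>Suc r. c i * (\<Sum>j<i. a (k+j)))" for k
  have bstep: "b (Suc k) = b k" for k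
  proof -
    have tel: "(\<Sum>j<i. a (Suc k + j)) - (\<Sum>j<i. a (k+j)) = a (k+i) - a k" for i
      using sum_lessThan_telescope[where f = "\<lambda>j. a (k+j)" and m = i]
      by (simp add: sum_subtractf)
    have "b (Suc k) - b k = (\<Sum>i\<le>Suc r. c i * (\<Sum>j<i. a (Suc k+j)) - c i * (\<Sum>j<i. a (k+j)))"
      unfolding b_def by (rule sum_subtractf[symmetric])
    also have "\<dots> = (\<Sum>i\<le>Suc r. c i * (a (k+i) - a k))"
      by (intro sum.cong refl) (simp only: right_diff_distrib[symmetric] tel)
    also have "\<dots> = (\<Sum>i\<le>Suc r. c i * a (k+i)) - a k * (\<Sum>i\<le>Suc r. c i)"
      by (simp add: algebra_simps sum_subtractf sum_distrib_left)
    also have "\<dots> = 0" using Suc.prems(2) s0 by simp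
    finally show ?thesis by simp
  qed
  have bconst: "b k = b 0" for k by (induction k) (use bstep in auto)
  have "b \<longlonglongrightarrow> (\<Sum>i\<le>Suc r. c i * (\<Sum>j<i. 0))"
    unfolding b_def
    by (intro tendsto_intros) (use a0 LIMSEQ_ignore_initial_segment in auto)
  moreover have beq: "b = (\<lambda>_. b 0)" by (intro ext bconst)
  ultimately have "(\<lambda>_. b 0) \<longlonglongrightarrow> 0" by simp
  then have b0: "b 0 = 0" by (simp add: LIMSEQ_const_iff)
  define q where "q j = (\<Sum>i\<in>{j<..Suc r}. c i)" for j
  have "b k = (\<Sum>j\<le>r. q j * a (k+j))" for k
  proof -
    have "b k = (\<Sum>i\<le>Suc r. \<Sum>j\<in>{j\<in>{..r}. j < i}. c i * a (k+j))"
      unfolding b_def sum_distrib_left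
      by (rule sum.cong[OF refl], rule sum.cong) auto
    also have "\<dots> = (\<Sum>j\<le>r. \<Sum>i\<in>{i\<in>{..Suc r}. j < i}. c i * a (k+j))"
      by (rule sum.swap_restrict) auto
    also have "\<dots> = (\<Sum>j\<le>r. q j * a (k+j))"
      unfolding q_def sum_distrib_right
      by (rule sum.cong[OF refl], rule sum.cong) auto
    finally show ?thesis .
  qed
  moreover have "q r = c (Suc r)"
  proof -
    have "{r<..Suc r} = {Suc r}" by auto
    then show ?thesis unfolding q_def by simp
  qed
  ultimately show False
    using Suc.IH[of q] Suc.prems(1) bconst b0 by auto
qed




lemma powr_seq_props:
  fixes a :: "nat \<Rightarrow> real" and c d :: real
  assumes eq: "a \<sim>[at_top] (\<lambda>k. c * real k powr (-d-1))" and c: "c \<noteq> 0" and d: "0 < d"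
  shows "a \<longlonglongrightarrow> 0" "\<And>i. (\<lambda>k. a (k+i) / a k) \<longlonglongrightarrow> 1" "eventually (\<lambda>k. a k \<noteq> 0) sequentially"
proof -
  define f where "f k = c * real k powr (-d-1)" for k
  have eqf: "a \<sim>[at_top] f" using eq unfolding f_def by simp
  have f0: "f \<longlonglongrightarrow> 0" unfolding f_def
    using tendsto_mult_left[OF tendsto_neg_powr[of "-d-1" real sequentially, OF _ filterlim_real_sequentially], of c] d
    by simp
  show "a \<longlonglongrightarrow> 0" using asymp_equiv_tendsto_transfer[OF asymp_equiv_symI[OF eqf] f0] .
  have fnz: "eventually (\<lambda>k. f k \<noteq> 0) sequentially"
    using eventually_gt_at_top[of 0] by eventually_elim (use c in \<open>auto simp: f_def\<close>)
  show anz: "eventually (\<lambda>k. a k \<noteq> 0) sequentially"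
    using asymp_equiv_eventually_zeros[OF eqf] fnz by eventually_elim auto
  fix i :: nat
  have sh: "filterlim (\<lambda>k. k + i) sequentially sequentially"
    by (simp add: filterlim_add_const_nat_at_top)
  have r1: "(\<lambda>k. real (k+i) / real k) \<longlonglongrightarrow> 1" by real_asymp
  have "(\<lambda>k. (real (k+i) / real k) powr (-d-1)) \<longlonglongrightarrow> 1 powr (-d-1)"
    by (intro tendsto_intros r1) auto
  then have "(\<lambda>k. (real (k+i) / real k) powr (-d-1)) \<longlonglongrightarrow> 1" by simp
  then have "(\<lambda>k. f (k+i) / f k) \<longlonglongrightarrow> 1"
  proof (rule Lim_transform_eventually)
    show "eventually (\<lambda>k. (real (k+i) / real k) powr (-d-1) = f (k+i) / f k) sequentially"
      using eventually_gt_at_top[of 0]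
      by eventually_elim (use c in \<open>auto simp: f_def powr_divide\<close>)
  qed
  then have "(\<lambda>k. f (k+i)) \<sim>[sequentially] f" by (rule asymp_equivI')
  have "(\<lambda>k. a (k+i)) \<sim>[sequentially] (\<lambda>k. f (k+i))"
    using asymp_equiv_compose'[OF eqf sh] .
  also have "\<dots> \<sim>[sequentially] f" by fact
  also have "f \<sim>[sequentially] a" using eqf by (simp add: asymp_equiv_sym)
  finally have "(\<lambda>k. a (k+i)) \<sim>[sequentially] a" .
  then show "(\<lambda>k. a (k+i) / a k) \<longlonglongrightarrow> 1"
    by (rule asymp_equivD_strong) (use anz in \<open>eventually_elim, auto\<close>)
qed



lemma exists_rel:
  fixes x :: "nat \<Rightarrow> 'a::euclidean_space"
  shows "\<exists>c N. (\<exists>j\<le>N. c j \<noteq> 0) \<and> (\<Sum>j\<le>N. c j *\<^sub>R x j) = 0"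
proof (cases "inj_on x {..DIM('a)}")
  case True
  let ?S = "x ` {..DIM('a)}"
  have "card ?S = Suc DIM('a)" using True by (simp add: card_image)
  then have "dependent ?S" by (intro dependent_biggerset) auto
  then obtain u where u: "\<exists>v\<in>?S. u v \<noteq> 0" "(\<Sum>v\<in>?S. u v *\<^sub>R v) = 0"
    using dependent_finite[of ?S] by auto
  have "(\<Sum>j\<le>DIM('a). u (x j) *\<^sub>R x j) = 0"
    using u(2) by (simp add: sum.reindex[OF True])
  moreover have "\<exists>j\<le>DIM('a). u (x j) \<noteq> 0" using u(1) by auto
  ultimately have "(\<exists>j\<le>DIM('a). (\<lambda>j. u (x j)) j \<noteq> 0) \<and> (\<Sum>j\<le>DIM('a). (\<lambda>j. u (x j)) j *\<^sub>R x j) = 0"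
    by simp
  then show ?thesis by (rule exI[where x="DIM('a)", THEN exI[where x="\<lambda>j. u (x j)"]])
next
  case False
  then obtain i j where ij: "i \<le> DIM('a)" "j \<le> DIM('a)" "i \<noteq> j" "x i = x j"
    unfolding inj_on_def by auto
  define c where "c k = (if k = i then 1 else if k = j then -1 else (0::real))" for k
  have "(\<Sum>k\<le>DIM('a). c k *\<^sub>R x k) = (\<Sum>k\<in>{i,j}. c k *\<^sub>R x k)"
    by (rule sum.mono_neutral_right) (use ij in \<open>auto simp: c_def\<close>)
  also have "\<dots> = 0" using ij by (simp add: c_def)
  finally have "(\<Sum>k\<le>DIM('a). c k *\<^sub>R x k) = 0" .
  moreover have "c i \<noteq> 0" by (simp add: c_def)
  ultimately have "(\<exists>j\<le>DIM('a). c j \<noteq> 0) \<and> (\<Sum>k\<le>DIM('a). c k *\<^sub>R x k) = 0"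
    using ij(1) by blast
  then show ?thesis by (rule exI[where x="DIM('a)", THEN exI[where x=c]])
qed
lemma exists_rel':
  fixes x :: "nat \<Rightarrow> 'a::euclidean_space"
  shows "\<exists>c r. c r \<noteq> 0 \<and> (\<Sum>j\<le>r. c j *\<^sub>R x j) = 0"
proof -
  obtain c N where cN: "\<exists>j\<le>N. c j \<noteq> 0" "(\<Sum>j\<le>N. c j *\<^sub>R x j) = 0"
    using exists_rel[of x] by blast
  define r where "r = Max {j. j \<le> N \<and> c j \<noteq> 0}"
  have fin: "finite {j. j \<le> N \<and> c j \<noteq> 0}" by simp
  have r: "r \<in> {j. j \<le> N \<and> c j \<noteq> 0}" unfolding r_def
    using cN(1) by (intro Max_in fin) auto
  have big: "j \<le> N \<Longrightarrow> c j \<noteq> 0 \<Longrightarrow> j \<le> r" for j unfolding r_def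
    by (intro Max_ge fin) auto
  have "(\<Sum>j\<le>r. c j *\<^sub>R x j) = (\<Sum>j\<le>N. c j *\<^sub>R x j)"
    by (rule sum.mono_neutral_left) (use r big in \<open>auto simp: not_le\<close>)
  with cN r have "c r \<noteq> 0 \<and> (\<Sum>j\<le>r. c j *\<^sub>R x j) = 0" by simp
  then show ?thesis by (rule exI[where x=r, THEN exI[where x=c]])
qed



lemma matrix_add_rdistrib': "((A::real^'n^'m) + B) ** C = A ** C + B ** C"
  by (vector matrix_matrix_mult_def sum.distrib[symmetric] field_simps)

lemma matpow_add: "matpow A (m + n) = matpow A m ** matpow A n"
  by (induction m) (simp_all add: matrix_mul_assoc)

lemma sum_sandwich:
  fixes A :: "real^'h^'y" and B :: "real^'x^'h" and M :: "nat \<Rightarrow> real^'h^'h"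
  assumes "finite S"
  shows "(\<Sum>l\<in>S. c l *\<^sub>R (A ** M l ** B)) = A ** (\<Sum>l\<in>S. c l *\<^sub>R M l) ** B"
  using assms
proof (induction S rule: finite_induct)
  case empty then show ?case by simp
next
  case (insert x F)
  then show ?case
    by (simp add: matrix_add_ldistrib matrix_add_rdistrib' matrix_scalar_ac scalar_matrix_assoc)
qed

lemma rnn_no_lm: "\<not> long_memory (rnn_coeff Wzh Whh Whx)"
proof
  assume "long_memory (rnn_coeff Wzh Whh Whx)"
  then obtain i j d c where dc: "0 < d" "c \<noteq> 0"
    and eq: "(\<lambda>k. rnn_coeff Wzh Whh Whx k $ i $ j) \<sim>[at_top] (\<lambda>k. c * real k powr (-d-1))"
    unfolding long_memory_def by blast
  define a where "a k = rnn_coeff Wzh Whh Whx k $ i $ j" for k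
  have eqa: "a \<sim>[at_top] (\<lambda>k. c * real k powr (-d-1))" using eq unfolding a_def by simp
  obtain cc r where rel: "cc r \<noteq> 0" "(\<Sum>l\<le>r. cc l *\<^sub>R matpow Whh l) = 0"
    using exists_rel'[of "matpow Whh"] by blast
  have "\<forall>k. (\<Sum>l\<le>r. cc l * a (k+l)) = 0"
  proof
    fix k
    have "(\<Sum>l\<le>r. cc l * a (k+l)) = (\<Sum>l\<le>r. cc l *\<^sub>R rnn_coeff Wzh Whh Whx (k+l)) $ i $ j"
      by (simp add: a_def)
    also have "(\<Sum>l\<le>r. cc l *\<^sub>R rnn_coeff Wzh Whh Whx (k+l))
        = (\<Sum>l\<le>r. cc l *\<^sub>R ((Wzh ** matpow Whh k) ** matpow Whh l ** Whx))"
      unfolding rnn_coeff_def matpow_add by (simp add: matrix_mul_assoc)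
    also have "\<dots> = (Wzh ** matpow Whh k) ** (\<Sum>l\<le>r. cc l *\<^sub>R matpow Whh l) ** Whx"
      by (rule sum_sandwich) simp
    also have "\<dots> = 0" using rel(2) by simp
    finally show "(\<Sum>l\<le>r. cc l * a (k+l)) = 0" by simp
  qed
  with no_rec[OF powr_seq_props[OF eqa dc(2) dc(1)]] rel(1) show False by blast
qed

lemma fdiff_poch: "fdiff_w k d = pochhammer (-d) k / fact k"
proof (induction k)
  case 0 then show ?case by (simp add: fdiff_w_def)
next
  case (Suc k)
  have "fdiff_w (Suc k) d = fdiff_w k d * ((real k - d) / (real k + 1))"
    by (simp add: fdiff_w_def)
  also have "\<dots> = pochhammer (-d) k / fact k * ((real k - d) / (real k + 1))" using Suc by simp
  also have "\<dots> = pochhammer (-d) (Suc k) / fact (Suc k)"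
    by (simp add: pochhammer_Suc fact_Suc field_simps)
  finally show ?case .
qed

lemma fdiff_asymp:
  fixes d :: real
  assumes d: "0 < d" "d < 1/2"
  shows "(\<lambda>k. fdiff_w k d) \<sim>[at_top] (\<lambda>k. (1 / Gamma (-d)) * real k powr (-d-1))"
proof (rule asymp_equivI')
  define G where "G = Gamma (-d)"
  have nint: "-d \<notin> \<int>\<^sub>\<le>\<^sub>0"
  proof
    assume "-d \<in> \<int>\<^sub>\<le>\<^sub>0"
    then obtain n :: nat where "-d = - of_nat n" by (elim nonpos_Ints_cases')
    then have "d = real n" by simp
    with d show False by (cases n) auto
  qed
  have G: "G \<noteq> 0" unfolding G_def using Gamma_nonzero[OF nint] .
  have P: "pochhammer (-d) k \<noteq> 0" for k
  proof
    assume "pochhammer (-d) k = 0"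
    then obtain n where "-d = - of_nat n" by (auto simp: pochhammer_eq_0_iff)
    then have "d = real n" by simp
    with d show False by (cases n) auto
  qed
  have L1: "(\<lambda>k. G / Gamma_series (-d) k) \<longlonglongrightarrow> G / G"
    unfolding G_def by (intro tendsto_intros Gamma_series_LIMSEQ) (use G G_def in auto)
  have L2: "(\<lambda>k. real k / (real k - d)) \<longlonglongrightarrow> 1" by real_asymp
  have L: "(\<lambda>k. G / Gamma_series (-d) k * (real k / (real k - d))) \<longlonglongrightarrow> 1"
    using tendsto_mult[OF L1 L2] G by simp
  show "((\<lambda>k. fdiff_w k d / ((1 / Gamma (-d)) * real k powr (-d-1))) \<longlongrightarrow> 1) at_top"
  proof (rule Lim_transform_eventually[OF L])
    show "eventually (\<lambda>k. G / Gamma_series (-d) k * (real k / (real k - d)) =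
        fdiff_w k d / ((1 / Gamma (-d)) * real k powr (-d-1))) at_top"
      using eventually_gt_at_top[of 0]
    proof eventually_elim
      case (elim k)
      have kd: "real k - d \<noteq> 0" using d elim by linarith
      have kp: "real k powr (-d) = real k powr (-d-1) * real k"
      proof -
        have "real k powr (-d-1) * real k = real k powr (-d-1) * real k powr 1"
          using elim by simp
        also have "\<dots> = real k powr (-d-1+1)" by (rule powr_add[symmetric])
        finally show ?thesis by simp
      qed
      have ex: "exp (-d * ln (real k)) = real k powr (-d)"
        using elim by (simp add: powr_def)
      have GS: "Gamma_series (-d) k = fact k * (real k powr (-d-1) * real k) / (pochhammer (-d) k * (real k - d))"
        unfolding Gamma_series_def using ex kp by (simp add: pochhammer_Suc)
      have kpnz: "real k powr (-d-1) \<noteq> 0" using elim by simp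
      show ?case
        unfolding GS fdiff_poch G_def[symmetric]
        using P[of k] kd kpnz G elim by (simp add: field_simps)
    qed
  qed
qed



lemma mrnnf_entry:
  fixes Wzm :: "real^'m^'y" and Wmf :: "real^'x^'m" and d :: "real^'x"
  assumes "Wzm = (\<chi> a b. 1)" "Wmf = (\<chi> a b. 1)" "k \<ge> 1"
  shows "mrnnf_coeff (0::real^'h^'y) (0::real^'h^'h) (0::real^'x^'h) Wzm (0::real^'m^'m) Wmf d k $ i $ l
     = real CARD('m) * fdiff_w k (d $ l)"
proof -
  have "(\<Sum>j\<in>{1..k}. matpow (0::real^'m^'m) (k - j) ** Wmf ** fdiff_minus_I_coeff d j)
      = (\<Sum>j\<in>{1..k}. if j = k then Wmf ** fdiff_minus_I_coeff d k else 0)"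
  proof (rule sum.cong[OF refl])
    fix j assume j: "j \<in> {1..k}"
    show "matpow (0::real^'m^'m) (k - j) ** Wmf ** fdiff_minus_I_coeff d j
        = (if j = k then Wmf ** fdiff_minus_I_coeff d k else 0)"
    proof (cases "j = k")
      case False
      then obtain n where "k - j = Suc n" using j by (metis Suc_diff_Suc atLeastAtMost_iff le_neq_implies_less)
      then show ?thesis using False by simp
    qed simp
  qed
  also have "\<dots> = Wmf ** fdiff_minus_I_coeff d k" using assms(3) by simp
  finally have S: "(\<Sum>j\<in>{1..k}. matpow (0::real^'m^'m) (k - j) ** Wmf ** fdiff_minus_I_coeff d j)
      = Wmf ** fdiff_minus_I_coeff d k" .
  show ?thesis
    unfolding mrnnf_coeff_def S using assms
    by (simp add: matrix_matrix_mult_def fdiff_minus_I_coeff_def if_distrib if_distribR cong: if_cong)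
qed



theorem theorem3:
  shows "(\<forall>(d :: real^'x). (\<forall>i. 0 < d $ i \<and> d $ i < 1/2) \<longrightarrow>
            (\<exists>(Wzh :: real^'h^'y) (Whh :: real^'h^'h) (Whx :: real^'x^'h)
               (Wzm :: real^'m^'y) (Wmm :: real^'m^'m) (Wmf :: real^'x^'m).
               long_memory (mrnnf_coeff Wzh Whh Whx Wzm Wmm Wmf d)))
       \<and> (\<forall>(Wzh :: real^'h^'y) (Whh :: real^'h^'h) (Whx :: real^'x^'h).
            \<not> long_memory (rnn_coeff Wzh Whh Whx))"
proof (intro conjI allI impI)
  fix Wzh :: "real^'h^'y" and Whh :: "real^'h^'h" and Whx :: "real^'x^'h"
  show "\<not> long_memory (rnn_coeff Wzh Whh Whx)" by (rule rnn_no_lm)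
next
  fix d :: "real^'x"
  assume dd: "\<forall>i. 0 < d $ i \<and> d $ i < 1/2"
  obtain l :: 'x where True by blast
  obtain i :: 'y where True by blast
  define Wzm :: "real^'m^'y" where "Wzm = (\<chi> a b. 1)"
  define Wmf :: "real^'x^'m" where "Wmf = (\<chi> a b. 1)"
  define e where "e = d $ l"
  have e: "0 < e" "e < 1/2" using dd unfolding e_def by auto
  define c where "c = real CARD('m) / Gamma (-e)"
  have G: "Gamma (-e) \<noteq> 0"
  proof (rule Gamma_nonzero, rule notI)
    assume "-e \<in> \<int>\<^sub>\<le>\<^sub>0"
    then obtain n :: nat where "-e = - of_nat n" by (elim nonpos_Ints_cases')
    then have "e = real n" by simp
    with e show False by (cases n) auto
  qed
  have cnz: "c \<noteq> 0" unfolding c_def using G by simp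
  have "(\<lambda>k. real CARD('m) * fdiff_w k e) \<sim>[at_top]
        (\<lambda>k. real CARD('m) * ((1 / Gamma (-e)) * real k powr (-e-1)))"
    by (intro asymp_equiv_intros fdiff_asymp e)
  also have "(\<lambda>k. real CARD('m) * ((1 / Gamma (-e)) * real k powr (-e-1))) = (\<lambda>k. c * real k powr (-e-1))"
    unfolding c_def by (simp add: field_simps)
  finally have A: "(\<lambda>k. real CARD('m) * fdiff_w k e) \<sim>[at_top] (\<lambda>k. c * real k powr (-e-1))" .
  have ev: "eventually (\<lambda>k. mrnnf_coeff (0::real^'h^'y) (0::real^'h^'h) (0::real^'x^'h) Wzm (0::real^'m^'m) Wmf d k $ i $ l
        = real CARD('m) * fdiff_w k e) at_top"
    using eventually_ge_at_top[of 1]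
    by eventually_elim (simp add: mrnnf_entry Wzm_def Wmf_def e_def)
  have ev2: "eventually (\<lambda>k. c * real k powr (-e-1) = c * real k powr (-e-1)) at_top" by simp
  have "(\<lambda>k. mrnnf_coeff (0::real^'h^'y) (0::real^'h^'h) (0::real^'x^'h) Wzm (0::real^'m^'m) Wmf d k $ i $ l)
      \<sim>[at_top] (\<lambda>k. c * real k powr (-e-1))"
    using asymp_equiv_cong[OF ev ev2] A by simp
  then have "long_memory (mrnnf_coeff (0::real^'h^'y) (0::real^'h^'h) (0::real^'x^'h) Wzm (0::real^'m^'m) Wmf d)"
    unfolding long_memory_def using e cnz by blast
  then show "\<exists>(Wzh :: real^'h^'y) (Whh :: real^'h^'h) (Whx :: real^'x^'h)
               (Wzm :: real^'m^'y) (Wmm :: real^'m^'m) (Wmf :: real^'x^'m).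
               long_memory (mrnnf_coeff Wzh Whh Whx Wzm Wmm Wmf d)" by blast
qed


end
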